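(* Let $T$ be the weighted shift on $\ell^2$ associated to a bounded complex sequence $(a_j)_{j\ge1}$. If both $T$ and its mean transform $M(T)$ are $2$-isometries, then $T$ is an isometry, and in particular $T=\Delta(T)=M(T)$.
   Context: $\ell^2$ has canonical basis $(e_j)_{j\ge1}$; the weighted shift associated to $(a_j)$ is the operator with $Te_j=a_je_{j+1}$. For $T\in B(H)$ with polar decomposition $T=V|T|$ ($|T|=(T^*T)^{1/2}$, $V$ the partial isometry with $\ker V=\ker T$), the Aluthge transform is $\Delta(T)=|T|^{1/2}V|T|^{1/2}$ and the mean transform is $M(T)=\frac12(|T|V+V|T|)$. $T$ is a $2$-isometry if $\|x\|^2-2\|Tx\|^2+\|T^2x\|^2=0$ for all $x\in H$. *)

theory Defs
  imports "HOL-Analysis.Analysis"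
begin

text \<open>The Hilbert space l2 is modelled as the set of square-summable sequences
  nat \<Rightarrow> complex (index 0 plays the role of index 1 of the paper).
  Operators are functions on sequences; only their action on l2 matters.\<close>

definition l2 :: "(nat \<Rightarrow> complex) set" where
  "l2 = {x. summable (\<lambda>n. (cmod (x n))\<^sup>2)}"

definition l2inner :: "(nat \<Rightarrow> complex) \<Rightarrow> (nat \<Rightarrow> complex) \<Rightarrow> complex" where
  "l2inner x y = (\<Sum>n. x n * cnj (y n))"

definition l2norm :: "(nat \<Rightarrow> complex) \<Rightarrow> real" where
  "l2norm x = sqrt (\<Sum>n. (cmod (x n))\<^sup>2)"

definition bdd_op :: "((nat \<Rightarrow> complex) \<Rightarrow> (nat \<Rightarrow> complex)) \<Rightarrow> bool" where
  "bdd_op A \<longleftrightarrow>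
     (\<forall>x\<in>l2. A x \<in> l2) \<and>
     (\<forall>x\<in>l2. \<forall>y\<in>l2. A (\<lambda>n. x n + y n) = (\<lambda>n. A x n + A y n)) \<and>
     (\<forall>x\<in>l2. \<forall>c. A (\<lambda>n. c * x n) = (\<lambda>n. c * A x n)) \<and>
     (\<exists>C. \<forall>x\<in>l2. l2norm (A x) \<le> C * l2norm x)"

definition is_adjoint :: "((nat \<Rightarrow> complex) \<Rightarrow> (nat \<Rightarrow> complex)) \<Rightarrow> ((nat \<Rightarrow> complex) \<Rightarrow> (nat \<Rightarrow> complex)) \<Rightarrow> bool" where
  "is_adjoint A B \<longleftrightarrow> bdd_op A \<and> bdd_op B \<and>
     (\<forall>x\<in>l2. \<forall>y\<in>l2. l2inner (A x) y = l2inner x (B y))"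

text \<open>Positive operator: \<langle>Px,x\<rangle> \<ge> 0 for all x (self-adjoint on a complex space).\<close>
definition positive_op :: "((nat \<Rightarrow> complex) \<Rightarrow> (nat \<Rightarrow> complex)) \<Rightarrow> bool" where
  "positive_op P \<longleftrightarrow> bdd_op P \<and>
     (\<forall>x\<in>l2. Im (l2inner (P x) x) = 0 \<and> Re (l2inner (P x) x) \<ge> 0)"

definition is_pos_sqrt :: "((nat \<Rightarrow> complex) \<Rightarrow> (nat \<Rightarrow> complex)) \<Rightarrow> ((nat \<Rightarrow> complex) \<Rightarrow> (nat \<Rightarrow> complex)) \<Rightarrow> bool" where
  "is_pos_sqrt Q P \<longleftrightarrow> positive_op Q \<and> (\<forall>x\<in>l2. Q (Q x) = P x)"

definition is_modulus :: "((nat \<Rightarrow> complex) \<Rightarrow> (nat \<Rightarrow> complex)) \<Rightarrow> ((nat \<Rightarrow> complex) \<Rightarrow> (nat \<Rightarrow> complex)) \<Rightarrow> bool" where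
  "is_modulus P T \<longleftrightarrow> (\<exists>S. is_adjoint T S \<and> is_pos_sqrt P (\<lambda>x. S (T x)))"

definition partial_isometry :: "((nat \<Rightarrow> complex) \<Rightarrow> (nat \<Rightarrow> complex)) \<Rightarrow> bool" where
  "partial_isometry V \<longleftrightarrow> bdd_op V \<and>
     (\<forall>x\<in>l2. (\<forall>y\<in>l2. V y = (\<lambda>n. 0) \<longrightarrow> l2inner x y = 0) \<longrightarrow> l2norm (V x) = l2norm x)"

definition polar_decomp :: "((nat \<Rightarrow> complex) \<Rightarrow> (nat \<Rightarrow> complex)) \<Rightarrow> ((nat \<Rightarrow> complex) \<Rightarrow> (nat \<Rightarrow> complex)) \<Rightarrow> ((nat \<Rightarrow> complex) \<Rightarrow> (nat \<Rightarrow> complex)) \<Rightarrow> bool" where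
  "polar_decomp T V P \<longleftrightarrow> is_modulus P T \<and> partial_isometry V \<and>
     (\<forall>x\<in>l2. V x = (\<lambda>n. 0) \<longleftrightarrow> T x = (\<lambda>n. 0)) \<and>
     (\<forall>x\<in>l2. T x = V (P x))"

text \<open>Aluthge transform |T|^(1/2) V |T|^(1/2), with Q = |T|^(1/2).\<close>
definition aluthge :: "((nat \<Rightarrow> complex) \<Rightarrow> (nat \<Rightarrow> complex)) \<Rightarrow> ((nat \<Rightarrow> complex) \<Rightarrow> (nat \<Rightarrow> complex)) \<Rightarrow> (nat \<Rightarrow> complex) \<Rightarrow> (nat \<Rightarrow> complex)" where
  "aluthge V Q = (\<lambda>x. Q (V (Q x)))"

text \<open>Mean transform (|T| V + V |T|)/2, with P = |T|.\<close>
definition mean_tr :: "((nat \<Rightarrow> complex) \<Rightarrow> (nat \<Rightarrow> complex)) \<Rightarrow> ((nat \<Rightarrow> complex) \<Rightarrow> (nat \<Rightarrow> complex)) \<Rightarrow> (nat \<Rightarrow> complex) \<Rightarrow> (nat \<Rightarrow> complex)" where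
  "mean_tr V P = (\<lambda>x. (\<lambda>n. (P (V x) n + V (P x) n) / 2))"

text \<open>Weighted shift T e_j = a_j e_{j+1}.\<close>
definition wshift :: "(nat \<Rightarrow> complex) \<Rightarrow> (nat \<Rightarrow> complex) \<Rightarrow> (nat \<Rightarrow> complex)" where
  "wshift a x = (\<lambda>n. if n = 0 then 0 else a (n - 1) * x (n - 1))"

definition two_isometry :: "((nat \<Rightarrow> complex) \<Rightarrow> (nat \<Rightarrow> complex)) \<Rightarrow> bool" where
  "two_isometry T \<longleftrightarrow>
     (\<forall>x\<in>l2. (l2norm x)\<^sup>2 - 2 * (l2norm (T x))\<^sup>2 + (l2norm (T (T x)))\<^sup>2 = 0)"

definition isometry_op :: "((nat \<Rightarrow> complex) \<Rightarrow> (nat \<Rightarrow> complex)) \<Rightarrow> bool" where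
  "isometry_op T \<longleftrightarrow> (\<forall>x\<in>l2. l2norm (T x) = l2norm x)"

end

theory Submission
  imports Defs
begin

definition ev :: "nat \<Rightarrow> complex \<Rightarrow> nat \<Rightarrow> complex" where
  "ev j c = (\<lambda>k. if k = j then c else 0)"

lemma suminf_single: "(\<Sum>n. (if n = j then f n else 0)) = (f j :: 'a::{t2_space,comm_monoid_add})"
  using sums_single[of j f] sums_unique by metis

lemma summable_single: "summable (\<lambda>n. (if n = j then f n else (0::'a::{t2_space,comm_monoid_add})))"
  using sums_single[of j f] sums_summable by blast

lemma ev_l2: "ev j c \<in> l2"
proof -
  have "(\<lambda>n. (cmod (ev j c n))\<^sup>2) = (\<lambda>n. if n = j then (cmod c)\<^sup>2 else 0)"
    by (auto simp: ev_def)
  then show ?thesis unfolding l2_def using summable_single[of j "\<lambda>_. (cmod c)\<^sup>2"] by simp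
qed

lemma l2norm_ev: "l2norm (ev j c) = cmod c"
proof -
  have "(\<lambda>n. (cmod (ev j c n))\<^sup>2) = (\<lambda>n. if n = j then (cmod c)\<^sup>2 else 0)"
    by (auto simp: ev_def)
  then show ?thesis unfolding l2norm_def using suminf_single[of j "\<lambda>_. (cmod c)\<^sup>2"] by simp
qed

lemma l2inner_ev: "l2inner (ev j c) y = c * cnj (y j)"
proof -
  have "(\<lambda>n. ev j c n * cnj (y n)) = (\<lambda>n. if n = j then c * cnj (y j) else 0)"
    by (auto simp: ev_def)
  then show ?thesis unfolding l2inner_def using suminf_single[of j "\<lambda>_. c * cnj (y j)"] by simp
qed

lemma wshift_ev: "wshift a (ev j c) = ev (Suc j) (a j * c)"
  by (rule ext) (auto simp: wshift_def ev_def)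

lemma ev_scale: "ev j c = (\<lambda>n. c * ev j 1 n)"
  by (auto simp: ev_def)

lemma ev_scale2: "(\<lambda>n. d * ev j c n) = ev j (d * c)"
  by (auto simp: ev_def)

lemma op_ev: "bdd_op A \<Longrightarrow> A (ev j c) = (\<lambda>n. c * A (ev j 1) n)"
  unfolding bdd_op_def using ev_l2 ev_scale by metis

lemma op_ev2: "bdd_op A \<Longrightarrow> A (ev j 1) = ev i d \<Longrightarrow> A (ev j c) = ev i (c * d)"
  using op_ev ev_scale2 by metis

lemma l2_add: "x \<in> l2 \<Longrightarrow> y \<in> l2 \<Longrightarrow> (\<lambda>n. x n + y n) \<in> l2"
proof -
  assume x: "x \<in> l2" and y: "y \<in> l2"
  have "summable (\<lambda>n. 2 * (cmod (x n))\<^sup>2 + 2 * (cmod (y n))\<^sup>2)"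
    using x y unfolding l2_def by (intro summable_add summable_mult) auto
  moreover have "norm ((cmod (x n + y n))\<^sup>2) \<le> 2 * (cmod (x n))\<^sup>2 + 2 * (cmod (y n))\<^sup>2" for n
  proof -
    have "cmod (x n + y n) \<le> cmod (x n) + cmod (y n)" by (rule norm_triangle_ineq)
    hence "(cmod (x n + y n))\<^sup>2 \<le> (cmod (x n) + cmod (y n))\<^sup>2"
      by (simp add: power_mono)
    also have "\<dots> \<le> 2 * (cmod (x n))\<^sup>2 + 2 * (cmod (y n))\<^sup>2"
      using sum_squares_bound[of "cmod (x n)" "cmod (y n)"] by (simp add: power2_eq_square algebra_simps)
    finally show ?thesis by simp
  qed
  ultimately have "summable (\<lambda>n. (cmod (x n + y n))\<^sup>2)"
    by (rule summable_comparison_test')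
  then show ?thesis unfolding l2_def by simp
qed

lemma l2_scale: "x \<in> l2 \<Longrightarrow> (\<lambda>n. c * x n) \<in> l2"
proof -
  assume x: "x \<in> l2"
  have "summable (\<lambda>n. (cmod c)\<^sup>2 * (cmod (x n))\<^sup>2)"
    using x unfolding l2_def by (intro summable_mult) auto
  then show ?thesis unfolding l2_def by (simp add: norm_mult power_mult_distrib)
qed

lemma l2norm_sq: "x \<in> l2 \<Longrightarrow> (l2norm x)\<^sup>2 = (\<Sum>n. (cmod (x n))\<^sup>2)"
  unfolding l2norm_def l2_def by (simp add: suminf_nonneg)

lemma l2inner_self_scale:
  assumes "x \<in> l2" shows "l2inner (\<lambda>n. c * x n) x = c * complex_of_real ((l2norm x)\<^sup>2)"
proof -
  have s: "summable (\<lambda>n. (cmod (x n))\<^sup>2)" using assms unfolding l2_def by simp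
  have "(\<lambda>n. c * x n * cnj (x n)) = (\<lambda>n. c * complex_of_real ((cmod (x n))\<^sup>2))"
    by (rule ext) (metis complex_norm_square mult.assoc)
  hence "l2inner (\<lambda>n. c * x n) x = (\<Sum>n. c * complex_of_real ((cmod (x n))\<^sup>2))"
    unfolding l2inner_def by simp
  also have "\<dots> = c * (\<Sum>n. complex_of_real ((cmod (x n))\<^sup>2))"
    using s summable_of_real[OF s, where 'a=complex] by (intro suminf_mult) simp
  also have "(\<Sum>n. complex_of_real ((cmod (x n))\<^sup>2)) = complex_of_real (\<Sum>n. (cmod (x n))\<^sup>2)"
    using suminf_of_real[OF s, where 'a=complex] by (simp del: of_real_power)
  finally show ?thesis using l2norm_sq[OF assms] by simp
qed

lemma l2norm_zero: "x \<in> l2 \<Longrightarrow> l2norm x = 0 \<Longrightarrow> x = (\<lambda>n. 0)"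
proof -
  assume x: "x \<in> l2" "l2norm x = 0"
  have s: "summable (\<lambda>n. (cmod (x n))\<^sup>2)" using x unfolding l2_def by simp
  have "(\<Sum>n. (cmod (x n))\<^sup>2) = 0" using l2norm_sq[OF x(1)] x(2) by simp
  hence "\<forall>n. (cmod (x n))\<^sup>2 = 0" using suminf_eq_zero_iff[OF s] by simp
  thus ?thesis by auto
qed

lemma sqrt_eig:
  assumes P: "positive_op P" and x: "x \<in> l2" and mu: "\<mu> > 0"
    and eq: "P (P x) = (\<lambda>n. complex_of_real (\<mu>\<^sup>2) * x n)"
  shows "P x = (\<lambda>n. complex_of_real \<mu> * x n)"
proof -
  have b: "bdd_op P" using P unfolding positive_op_def by simp
  have Px: "P x \<in> l2" using b x unfolding bdd_op_def by simp
  define z where "z = (\<lambda>n. P x n + (- complex_of_real \<mu>) * x n)"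
  have mx: "(\<lambda>n. (- complex_of_real \<mu>) * x n) \<in> l2" using l2_scale[OF x] .
  have z: "z \<in> l2" unfolding z_def using l2_add[OF Px mx] .
  have addP: "\<forall>x\<in>l2. \<forall>y\<in>l2. P (\<lambda>n. x n + y n) = (\<lambda>n. P x n + P y n)"
    using b unfolding bdd_op_def by blast
  have "P z = (\<lambda>n. P (P x) n + P (\<lambda>n. (- complex_of_real \<mu>) * x n) n)"
    unfolding z_def using addP[rule_format, OF Px mx] .
  also have "P (\<lambda>n. (- complex_of_real \<mu>) * x n) = (\<lambda>n. (- complex_of_real \<mu>) * P x n)"
    using b x unfolding bdd_op_def by blast
  finally have Pz: "P z = (\<lambda>n. (- complex_of_real \<mu>) * z n)"
    unfolding eq z_def by (simp add: algebra_simps power2_eq_square)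
  have "Re (l2inner (P z) z) \<ge> 0" using P z unfolding positive_op_def by blast
  also have "l2inner (P z) z = (- complex_of_real \<mu>) * complex_of_real ((l2norm z)\<^sup>2)"
    unfolding Pz using l2inner_self_scale[OF z] .
  finally have "- \<mu> * (l2norm z)\<^sup>2 \<ge> 0" by simp
  hence "(l2norm z)\<^sup>2 \<le> 0" using mu by (simp add: mult_le_0_iff)
  hence "l2norm z = 0" by simp
  hence "z = (\<lambda>n. 0)" using l2norm_zero[OF z] by simp
  hence "P x n = complex_of_real \<mu> * x n" for n
    using fun_cong[of z "\<lambda>n. 0" n] unfolding z_def by (simp add: add_eq_0_iff)
  thus ?thesis by (rule ext)
qed


lemma key_alg:
  fixes x y z :: real
  assumes pos: "x > 0" "y > 0" "z > 0"
    and e1: "1 - 2*x\<^sup>2 + x\<^sup>2*y\<^sup>2 = 0"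
    and e2: "1 - 2*y\<^sup>2 + y\<^sup>2*z\<^sup>2 = 0"
    and e3: "1 - 2*((x+y)/2)\<^sup>2 + ((x+y)/2)\<^sup>2*((y+z)/2)\<^sup>2 = 0"
  shows "x = 1"
proof -
  define p where "p = (x+y)/2"
  define q where "q = (y+z)/2"
  have pp: "p > 0" using pos p_def by simp
  have y2: "y\<^sup>2 = 2 - 1/x\<^sup>2" using e1 pos by (simp add: field_simps)
  have z2: "z\<^sup>2 = 2 - 1/y\<^sup>2" using e2 pos by (simp add: field_simps)
  have q2: "q\<^sup>2 = 2 - 1/p\<^sup>2" using e3 pp unfolding p_def[symmetric] q_def[symmetric] by (simp add: field_simps)
  have conv: "1/x\<^sup>2 + 1/y\<^sup>2 \<ge> 2/p\<^sup>2"
  proof -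
    have h1: "(x+y)\<^sup>2 \<ge> 4*x*y" using sum_squares_bound[of x y] by (simp add: power2_eq_square algebra_simps)
    have h2: "x\<^sup>2 + y\<^sup>2 \<ge> 2*x*y" using sum_squares_bound[of x y] by simp
    have "(x+y)\<^sup>2 * (x\<^sup>2 + y\<^sup>2) \<ge> (4*x*y) * (2*x*y)"
      using h1 h2 pos by (intro mult_mono) auto
    hence h3: "(x+y)\<^sup>2 * (x\<^sup>2 + y\<^sup>2) \<ge> 8 * x\<^sup>2 * y\<^sup>2" by (simp add: power2_eq_square algebra_simps)
    have "1/x\<^sup>2 + 1/y\<^sup>2 = (x\<^sup>2 + y\<^sup>2) / (x\<^sup>2*y\<^sup>2)" using pos by (simp add: field_simps)
    also have "2/p\<^sup>2 = 8 / (x+y)\<^sup>2" unfolding p_def by (simp add: power2_eq_square field_simps)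
    moreover have "8 / (x+y)\<^sup>2 \<le> (x\<^sup>2 + y\<^sup>2) / (x\<^sup>2*y\<^sup>2)"
      using h3 pos by (simp add: field_simps)
    ultimately show ?thesis by simp
  qed
  have yz: "y = z"
  proof (rule ccontr)
    assume "y \<noteq> z"
    hence "(y - z)\<^sup>2 > 0" by simp
    hence "q\<^sup>2 < (y\<^sup>2 + z\<^sup>2)/2" unfolding q_def by (simp add: power2_eq_square field_simps)
    also have "\<dots> = 2 - (1/x\<^sup>2 + 1/y\<^sup>2)/2" by (subst y2, subst z2) (simp add: field_simps)
    also have "\<dots> \<le> 2 - 1/p\<^sup>2" using conv by simp
    finally show False using q2 by simp
  qed
  have "y\<^sup>2 * y\<^sup>2 - 2*y\<^sup>2 + 1 = 0" using e2 yz by (simp add: algebra_simps)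
  hence "(y\<^sup>2 - 1)\<^sup>2 = 0" by (simp add: power2_eq_square algebra_simps)
  hence "y\<^sup>2 = 1" by simp
  hence "x\<^sup>2 = 1" using e1 by simp
  thus "x = 1" using pos by (simp add: power2_eq_1_iff)
qed


theorem mainTheorem14:
  fixes a :: "nat \<Rightarrow> complex"
    and V P Q :: "(nat \<Rightarrow> complex) \<Rightarrow> (nat \<Rightarrow> complex)"
  assumes bounded: "\<exists>B. \<forall>j. cmod (a j) \<le> B"
    and polar: "polar_decomp (wshift a) V P"
    and sqrtP: "is_pos_sqrt Q P"
    and T2: "two_isometry (wshift a)"
    and M2: "two_isometry (mean_tr V P)"
  shows "isometry_op (wshift a) \<and>
         (\<forall>x\<in>l2. wshift a x = aluthge V Q x) \<and>
         (\<forall>x\<in>l2. aluthge V Q x = mean_tr V P x)"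
proof -
  define T where "T = wshift a"
  define r where "r n = cmod (a n)" for n
  obtain S where adj: "is_adjoint T S" and Psq: "is_pos_sqrt P (\<lambda>x. S (T x))"
    using polar unfolding polar_decomp_def is_modulus_def T_def by blast
  have bT: "bdd_op T" and bS: "bdd_op S" and adjeq: "\<forall>x\<in>l2. \<forall>y\<in>l2. l2inner (T x) y = l2inner x (S y)"
    using adj unfolding is_adjoint_def by auto
  have pP: "positive_op P" and PP: "\<forall>x\<in>l2. P (P x) = S (T x)"
    using Psq unfolding is_pos_sqrt_def by auto
  have bP: "bdd_op P" using pP unfolding positive_op_def by simp
  have pQ: "positive_op Q" and QQ: "\<forall>x\<in>l2. Q (Q x) = P x"
    using sqrtP unfolding is_pos_sqrt_def by auto
  have bV: "bdd_op V" using polar unfolding polar_decomp_def partial_isometry_def by simp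
  have TVP: "\<forall>x\<in>l2. T x = V (P x)" using polar unfolding polar_decomp_def T_def by simp
  have Tl2: "\<forall>x\<in>l2. T x \<in> l2" using bT unfolding bdd_op_def by simp
  have Pl2: "\<forall>x\<in>l2. P x \<in> l2" using bP unfolding bdd_op_def by simp
  have Vl2: "\<forall>x\<in>l2. V x \<in> l2" using bV unfolding bdd_op_def by simp
  have Sform: "S y n = cnj (a n) * y (Suc n)" if y: "y \<in> l2" for y n
  proof -
    have "l2inner (T (ev n 1)) y = l2inner (ev n 1) (S y)" using adjeq ev_l2 y by blast
    hence "a n * cnj (y (Suc n)) = cnj (S y n)"
      unfolding T_def wshift_ev l2inner_ev by simp
    hence "cnj (a n * cnj (y (Suc n))) = S y n" by (metis complex_cnj_cnj)
    thus ?thesis by simp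
  qed
  have STx: "S (T x) = (\<lambda>n. complex_of_real ((r n)\<^sup>2) * x n)" if x: "x \<in> l2" for x
  proof
    fix n
    have "S (T x) n = cnj (a n) * (T x) (Suc n)" using Sform Tl2 x by blast
    also have "\<dots> = (a n * cnj (a n)) * x n" unfolding T_def wshift_def by simp
    also have "\<dots> = complex_of_real ((r n)\<^sup>2) * x n" unfolding r_def complex_norm_square by simp
    finally show "S (T x) n = complex_of_real ((r n)\<^sup>2) * x n" .
  qed
  have Tev: "T (ev n c) = ev (Suc n) (a n * c)" for n c unfolding T_def by (rule wshift_ev)
  have Teq: "1 - 2 * (r n)\<^sup>2 + (r (Suc n) * r n)\<^sup>2 = 0" for n
  proof -
    have "(l2norm (ev n 1))\<^sup>2 - 2 * (l2norm (T (ev n 1)))\<^sup>2 + (l2norm (T (T (ev n 1))))\<^sup>2 = 0"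
      using T2 ev_l2 unfolding two_isometry_def T_def by blast
    thus ?thesis unfolding Tev l2norm_ev r_def by (simp add: norm_mult)
  qed
  have rpos: "r n > 0" for n
  proof -
    have "r n \<noteq> 0" using Teq[of n] by auto
    thus ?thesis unfolding r_def by simp
  qed
  have Pev: "P (ev n 1) = ev n (complex_of_real (r n))" for n
  proof -
    have "P (P (ev n 1)) = (\<lambda>k. complex_of_real ((r n)\<^sup>2) * ev n 1 k)"
      using PP STx ev_l2 by (auto simp: ev_def)
    hence "P (ev n 1) = (\<lambda>k. complex_of_real (r n) * ev n 1 k)"
      using sqrt_eig[OF pP ev_l2 rpos] by blast
    thus ?thesis using ev_scale2 by simp
  qed
  define u where "u n = a n / complex_of_real (r n)" for n
  have unorm: "cmod (u n) = 1" for n using rpos[of n] unfolding u_def r_def by (simp add: norm_divide)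
  have Vev: "V (ev n 1) = ev (Suc n) (u n)" for n
  proof -
    have "ev (Suc n) (a n) = V (ev n (complex_of_real (r n)))"
      using TVP ev_l2 Tev[of n 1] Pev[of n] by simp
    also have "\<dots> = (\<lambda>k. complex_of_real (r n) * V (ev n 1) k)" using op_ev[OF bV] .
    finally have fe: "ev (Suc n) (a n) k = complex_of_real (r n) * V (ev n 1) k" for k
      by (rule fun_cong)
    have "V (ev n 1) k = ev (Suc n) (u n) k" for k
    proof -
      have "V (ev n 1) k = ev (Suc n) (a n) k / complex_of_real (r n)"
        using fe[of k] rpos[of n] by (simp add: field_simps)
      thus ?thesis unfolding u_def ev_def by simp
    qed
    thus ?thesis by (rule ext)
  qed
  define m where "m n = (r n + r (Suc n)) / 2" for n
  have Mev: "mean_tr V P (ev n c) = ev (Suc n) (c * u n * complex_of_real (m n))" for n c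
  proof -
    have "P (V (ev n c)) = ev (Suc n) (c * u n * complex_of_real (r (Suc n)))"
      using op_ev2[OF bV Vev, of n c] op_ev2[OF bP Pev, of "Suc n" "c * u n"] by simp
    moreover have "V (P (ev n c)) = ev (Suc n) (c * complex_of_real (r n) * u n)"
      using op_ev2[OF bP Pev, of n c] op_ev2[OF bV Vev, of n "c * complex_of_real (r n)"] by simp
    ultimately show ?thesis unfolding mean_tr_def m_def
      by (intro ext) (auto simp: ev_def field_simps)
  qed
  have Meq: "1 - 2 * (m n)\<^sup>2 + (m n * m (Suc n))\<^sup>2 = 0" for n
  proof -
    have m0: "m k \<ge> 0" for k using rpos[of k] rpos[of "Suc k"] unfolding m_def by simp
    have "(l2norm (ev n 1))\<^sup>2 - 2 * (l2norm (mean_tr V P (ev n 1)))\<^sup>2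
          + (l2norm (mean_tr V P (mean_tr V P (ev n 1))))\<^sup>2 = 0"
      using M2 ev_l2 unfolding two_isometry_def by blast
    thus ?thesis unfolding Mev l2norm_ev using m0[of n] m0[of "Suc n"]
      by (simp add: norm_mult unorm)
  qed
  have r1: "r n = 1" for n
  proof (rule key_alg[of "r n" "r (Suc n)" "r (Suc (Suc n))"])
    show "0 < r n" "0 < r (Suc n)" "0 < r (Suc (Suc n))" using rpos by auto
    show "1 - 2 * (r n)\<^sup>2 + (r n)\<^sup>2 * (r (Suc n))\<^sup>2 = 0" using Teq[of n] by (simp add: power_mult_distrib mult.commute)
    show "1 - 2 * (r (Suc n))\<^sup>2 + (r (Suc n))\<^sup>2 * (r (Suc (Suc n)))\<^sup>2 = 0" using Teq[of "Suc n"] by (simp add: power_mult_distrib mult.commute)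
    show "1 - 2 * ((r n + r (Suc n)) / 2)\<^sup>2 + ((r n + r (Suc n)) / 2)\<^sup>2 * ((r (Suc n) + r (Suc (Suc n))) / 2)\<^sup>2 = 0"
      using Meq[of n] unfolding m_def power_mult_distrib by simp
  qed
  have Pid: "P x = x" if x: "x \<in> l2" for x
  proof -
    have "P (P x) = (\<lambda>n. complex_of_real (1\<^sup>2) * x n)" using PP STx x r1 by simp
    hence "P x = (\<lambda>n. complex_of_real 1 * x n)" using sqrt_eig[OF pP x, of 1] by simp
    thus ?thesis by simp
  qed
  have Qid: "Q x = x" if x: "x \<in> l2" for x
  proof -
    have "Q (Q x) = (\<lambda>n. complex_of_real (1\<^sup>2) * x n)" using QQ Pid x by simp
    hence "Q x = (\<lambda>n. complex_of_real 1 * x n)" using sqrt_eig[OF pQ x, of 1] by simp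
    thus ?thesis by simp
  qed
  have VT: "V x = T x" if x: "x \<in> l2" for x using TVP Pid x by simp
  have iso: "isometry_op T"
    unfolding isometry_op_def
  proof
    fix x assume x: "x \<in> l2"
    define f where "f n = (cmod (T x n))\<^sup>2" for n
    have sf: "summable f" using Tl2 x unfolding f_def l2_def by auto
    have "(\<Sum>n. f (Suc n)) = suminf f - f 0" using suminf_split_head[OF sf] .
    moreover have "f 0 = 0" unfolding f_def T_def wshift_def by simp
    moreover have "f (Suc n) = (cmod (x n))\<^sup>2" for n
      using r1[of n] unfolding f_def T_def wshift_def r_def by (simp add: norm_mult)
    ultimately have "suminf f = (\<Sum>n. (cmod (x n))\<^sup>2)" by simp
    thus "l2norm (T x) = l2norm x" unfolding l2norm_def f_def by simp
  qed
  have A: "T x = aluthge V Q x" if x: "x \<in> l2" for x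
    unfolding aluthge_def using Qid VT Tl2 x by simp
  have B: "aluthge V Q x = mean_tr V P x" if x: "x \<in> l2" for x
  proof -
    have "mean_tr V P x = (\<lambda>n. (T x n + T x n) / 2)"
      unfolding mean_tr_def using Pid VT Tl2 x by simp
    also have "\<dots> = T x" by simp
    finally show ?thesis using A[OF x] by simp
  qed
  show ?thesis using iso A B unfolding T_def by blast
qed

end
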